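(* Consider the system of ordinary differential equations \[ \begin{aligned} \frac{dr_a}{dt} &= \frac{m_a(p_a/\theta_{aa})^{n_{aa}}}{1+(p_a/\theta_{aa})^{n_{aa}}(p_b/\theta_b)^{n_b}}-\gamma_a r_a+A_1,\\ \frac{dr_b}{dt} &= \frac{m_b}{1+(p_a/\theta_a)^{n_a}}-\gamma_b r_b+B_1,\\ \frac{dp_a}{dt} &= k_a r_a-\delta_a p_a,\qquad \frac{dp_b}{dt} = k_b r_b-\delta_b p_b, \end{aligned} \] where $m_a,m_b,\gamma_a,\gamma_b,k_a,k_b,\delta_a,\delta_b,\theta_a,\theta_b,\theta_{aa}>0$, $A_1,B_1\ge 0$, and $n_a,n_b,n_{aa}$ are positive integers. Let $S^*=(r_a^*,r_b^*,p_a^*,p_b^* )$ be a steady state of this system with $p_a^*>0$, $p_b^*>0$. Set, with $p_a=p_a^*$, $p_b=p_b^*$, \[ X=\frac{m_a n_{aa} p_a^{n_{aa}-1}\theta_b^{2n_b}\theta_{aa}^{n_{aa}}}{(p_a^{n_{aa}}p_b^{n_b}+\theta_b^{n_b}\theta_{aa}^{n_{aa}})^2},\quad Y=-\frac{m_a n_b p_a^{2n_{aa}}p_b^{n_b-1}\theta_b^{n_b}}{(p_a^{n_{aa}}p_b^{n_b}+\theta_b^{n_b}\theta_{aa}^{n_{aa}})^2},\quad Z=-\frac{m_b n_a p_a^{n_a-1}\theta_a^{n_a}}{(p_a^{n_a}+\theta_a^{n_a})^2}, \] and \[ \begin{aligned} \epsilon_1&=\gamma_a+\gamma_b+\delta_a+\delta_b,\\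 \epsilon_2&=\gamma_a\gamma_b+(\gamma_a+\gamma_b)(\delta_a+\delta_b)+\delta_a\delta_b-k_aX,\\ \epsilon_3&=\delta_a\delta_b(\gamma_a+\gamma_b)+(\delta_a+\delta_b)\gamma_a\gamma_b-k_a(\delta_b+\gamma_b)X,\\ \epsilon_4&=\gamma_a\gamma_b\delta_a\delta_b-k_ak_bYZ-k_a\gamma_b\delta_bX. \end{aligned} \] If $\epsilon_1>0$, $\epsilon_3>0$, $\epsilon_4>0$ and $\epsilon_1\epsilon_2\epsilon_3-\epsilon_1^2\epsilon_4-\epsilon_3^2>0$, then $S^*$ is locally asymptotically stable.
   Context: This models a two-gene network in which gene $a$ is co-regulated by activation from its own protein $p_a$ and repression by protein $p_b$ (combined via a non-competitive AND logic), and gene $b$ is repressed by $p_a$; $r_a,r_b$ are mRNA concentrations and $p_a,p_b$ protein concentrations. A steady state is a point where all four right-hand sides vanish. *)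

theory Defs
  imports "HOL-Analysis.Analysis"
begin

type_synonym state = "real \<times> real \<times> real \<times> real"  (* (r_a, r_b, p_a, p_b) *)

definition grn_field ::
  "real \<Rightarrow> real \<Rightarrow> real \<Rightarrow> real \<Rightarrow> real \<Rightarrow> real \<Rightarrow> real \<Rightarrow> real \<Rightarrow>
   real \<Rightarrow> real \<Rightarrow> real \<Rightarrow> real \<Rightarrow> real \<Rightarrow> nat \<Rightarrow> nat \<Rightarrow> nat \<Rightarrow> state \<Rightarrow> state" where
  "grn_field ma mb ga gb ka kb da db tha thb thaa A1 B1 na nb naa =
     (\<lambda>(ra, rb, pa, pb).
        (ma * (pa / thaa) ^ naa / (1 + (pa / thaa) ^ naa * (pb / thb) ^ nb) - ga * ra + A1,
         mb / (1 + (pa / tha) ^ na) - gb * rb + B1,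
         ka * ra - da * pa,
         kb * rb - db * pb))"

definition is_solution :: "('a::real_normed_vector \<Rightarrow> 'a) \<Rightarrow> (real \<Rightarrow> 'a) \<Rightarrow> bool" where
  "is_solution F x \<longleftrightarrow>
     (\<forall>t\<ge>0. (x has_vector_derivative F (x t)) (at t within {0..}))"

definition lyapunov_stable :: "('a::real_normed_vector \<Rightarrow> 'a) \<Rightarrow> 'a \<Rightarrow> bool" where
  "lyapunov_stable F S \<longleftrightarrow>
     (\<forall>\<epsilon>>0. \<exists>\<delta>>0. \<forall>x. is_solution F x \<and> dist (x 0) S < \<delta> \<longrightarrow>
        (\<forall>t\<ge>0. dist (x t) S < \<epsilon>))"

definition locally_attractive :: "('a::real_normed_vector \<Rightarrow> 'a) \<Rightarrow> 'a \<Rightarrow> bool" where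
  "locally_attractive F S \<longleftrightarrow>
     (\<exists>\<eta>>0. \<forall>x. is_solution F x \<and> dist (x 0) S < \<eta> \<longrightarrow> (x \<longlongrightarrow> S) at_top)"

definition locally_asymptotically_stable :: "('a::real_normed_vector \<Rightarrow> 'a) \<Rightarrow> 'a \<Rightarrow> bool" where
  "locally_asymptotically_stable F S \<longleftrightarrow>
     F S = 0 \<and> lyapunov_stable F S \<and> locally_attractive F S"

end

theory Submission imports Defs begin

definition Amat :: "real \<Rightarrow> real \<Rightarrow> real \<Rightarrow> real \<Rightarrow> real \<Rightarrow> real \<Rightarrow> real \<Rightarrow> real \<Rightarrow> real \<Rightarrow> state \<Rightarrow> state" where
  "Amat g1 g2 d1 d2 ka kb X Y Z = (\<lambda>(u1, u2, u3, u4).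
     (- g1 * u1 + X * u3 + Y * u4, - g2 * u2 + Z * u3, ka * u1 - d1 * u3, kb * u2 - d2 * u4))"

definition "cf1 g1 g2 d1 d2 = g1 + g2 + d1 + d2"
definition "cf2 g1 g2 d1 d2 ka X = g1 * g2 + (g1 + g2) * (d1 + d2) + d1 * d2 - ka * X"
definition "cf3 g1 g2 d1 d2 ka X = d1 * d2 * (g1 + g2) + (d1 + d2) * g1 * g2 - ka * (d2 + g2) * X"
definition "cf4 g1 g2 d1 d2 ka kb X Y Z = g1 * g2 * d1 * d2 - ka * kb * Y * Z - ka * g2 * d2 * X"

lemma Amat_comp: "Amat g1 g2 d1 d2 ka kb X Y Z (u1, u2, u3, u4) =
     (- g1 * u1 + X * u3 + Y * u4, - g2 * u2 + Z * u3, ka * u1 - d1 * u3, kb * u2 - d2 * u4)"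
  by (simp add: Amat_def)

lemma hill_a:
  fixes thaa thb pa pb :: real
  assumes "thb > 0" "thaa > 0"
  shows "ma * (pa / thaa) ^ naa / (1 + (pa / thaa) ^ naa * (pb / thb) ^ nb)
       = ma * thb ^ nb * pa ^ naa / (pa ^ naa * pb ^ nb + thb ^ nb * thaa ^ naa)"
proof -
  have t: "thaa ^ naa \<noteq> 0" "thb ^ nb \<noteq> 0" using assms by auto
  have "1 + (pa / thaa) ^ naa * (pb / thb) ^ nb = (pa ^ naa * pb ^ nb + thb ^ nb * thaa ^ naa) / (thaa ^ naa * thb ^ nb)"
    using t by (simp add: power_divide field_simps)
  then show ?thesis using t assms
    by (cases "pa ^ naa * pb ^ nb + thb ^ nb * thaa ^ naa = 0") (simp_all add: power_divide field_simps)
qed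

lemma hill_b:
  fixes tha pa :: real
  assumes "tha > 0"
  shows "mb / (1 + (pa / tha) ^ na) = mb * tha ^ na / (pa ^ na + tha ^ na)"
proof -
  have t: "tha ^ na \<noteq> 0" using assms by auto
  have "1 + (pa / tha) ^ na = (pa ^ na + tha ^ na) / tha ^ na"
    using t by (simp add: power_divide field_simps)
  then show ?thesis using t
    by (cases "pa ^ na + tha ^ na = 0") (simp_all add: power_divide field_simps)
qed

lemma coef_atoms:
  fixes ma n m u3 u4 Pn Pm Qn Qm T S D :: real
  assumes "D = Pn * Qn + T * S" "D \<noteq> 0"
  shows "(ma * T * (n * u3 * Pm) * D - ma * T * Pn * (Pn * (m * u4 * Qm) + n * u3 * Pm * Qn)) / (D * D)
       = (ma * n * Pm * (T * T) * S / D ^ 2) * u3 + (- (ma * m * (Pn * Pn) * Qm * T / D ^ 2)) * u4"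
proof -
  have "ma * T * (n * u3 * Pm) * D - ma * T * Pn * (Pn * (m * u4 * Qm) + n * u3 * Pm * Qn)
      = ma * n * Pm * (T * T) * S * u3 - ma * m * (Pn * Pn) * Qm * T * u4"
    by (simp add: assms(1) algebra_simps)
  then show ?thesis using assms(2) by (simp add: field_simps power2_eq_square)
qed

lemma dfa:
  fixes ma thaa thb pa pb :: real
  assumes "thb > 0" "thaa > 0" "pa > 0" "pb > 0"
    and X_def: "X = ma * real naa * pa ^ (naa - 1) * thb ^ (2 * nb) * thaa ^ naa
                    / (pa ^ naa * pb ^ nb + thb ^ nb * thaa ^ naa) ^ 2"
    and Y_def: "Y = - (ma * real nb * pa ^ (2 * naa) * pb ^ (nb - 1) * thb ^ nb
                    / (pa ^ naa * pb ^ nb + thb ^ nb * thaa ^ naa) ^ 2)"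
  shows "((\<lambda>x::state. ma * thb ^ nb * fst (snd (snd x)) ^ naa / (fst (snd (snd x)) ^ naa * snd (snd (snd x)) ^ nb + thb ^ nb * thaa ^ naa))
     has_derivative (\<lambda>h. X * fst (snd (snd h)) + Y * snd (snd (snd h)))) (at (ra, rb, pa, pb))"
proof -
  have "pa ^ naa * pb ^ nb > 0" "thb ^ nb * thaa ^ naa > 0" using assms by auto
  then have D: "pa ^ naa * pb ^ nb + thb ^ nb * thaa ^ naa \<noteq> 0" by linarith
  show ?thesis
  apply (rule has_derivative_eq_rhs)
  apply (auto intro!: derivative_eq_intros simp: D)[1]
  apply (rule ext)
  apply (simp only: fst_conv snd_conv add_0_right)
  apply (subst coef_atoms[OF refl D])
  apply (simp add: X_def Y_def mult_2 power_add)
  done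
qed
lemma Amat_add: "Amat g1 g2 d1 d2 ka kb X Y Z (x + y) = Amat g1 g2 d1 d2 ka kb X Y Z x + Amat g1 g2 d1 d2 ka kb X Y Z y"
  by (cases x; cases y) (simp add: Amat_def algebra_simps)

lemma Amat_scale: "Amat g1 g2 d1 d2 ka kb X Y Z (c *\<^sub>R x) = c *\<^sub>R Amat g1 g2 d1 d2 ka kb X Y Z x"
  by (cases x) (simp add: Amat_def algebra_simps)

lemma Amat_shift: "Amat g1 g2 d1 d2 ka kb X Y Z h = Amat (g1 - \<mu>) (g2 - \<mu>) (d1 - \<mu>) (d2 - \<mu>) ka kb X Y Z h - \<mu> *\<^sub>R h"
  by (cases h) (simp add: Amat_def algebra_simps)

lemma lyap_id:
  fixes p0 p1 p2 p3 p4 :: "'a::real_inner"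
  assumes "p4 = - (b1 *\<^sub>R p3 + (b2 + b3 + b4) *\<^sub>R p2 + (b1 * (b3 + b4)) *\<^sub>R p1 + (b2 * b4) *\<^sub>R p0)"
  shows "b2*b3*b4 * inner p0 p1 + b2*b3 * inner p1 p2 + b2 * inner (p2 + b4 *\<^sub>R p0) (p3 + b4 *\<^sub>R p1)
     + inner (p3 + (b3 + b4) *\<^sub>R p1) (p4 + (b3 + b4) *\<^sub>R p2)
     = - b1 * inner (p3 + (b3 + b4) *\<^sub>R p1) (p3 + (b3 + b4) *\<^sub>R p1)"
  unfolding assms
  by (simp add: inner_add_left inner_add_right inner_commute algebra_simps)

lemma rh_b:
  fixes a1 a2 a3 a4 :: real
  assumes "a1 > 0" "a3 > 0" "a4 > 0" "a1 * a2 * a3 - a1^2 * a4 - a3^2 > 0"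
  shows "\<exists>b1 b2 b3 b4. b1 > 0 \<and> b2 > 0 \<and> b3 > 0 \<and> b4 > 0 \<and> a1 = b1 \<and> a2 = b2 + b3 + b4
            \<and> a3 = b1 * (b3 + b4) \<and> a4 = b2 * b4"
proof -
  have q: "a3 * (a1 * a2 - a3) > a1^2 * a4"
  proof -
    have "a3 * (a1 * a2 - a3) - a1^2 * a4 = a1 * a2 * a3 - a1^2 * a4 - a3^2"
      by (simp add: algebra_simps power2_eq_square)
    then show ?thesis using assms(4) by linarith
  qed
  have p: "a1^2 * a4 > 0" using assms by simp
  have d: "a1 * a2 - a3 > 0"
  proof (rule ccontr)
    assume "\<not> ?thesis"
    then have "a3 * (a1 * a2 - a3) \<le> 0" using assms(2) by (simp add: mult_nonneg_nonpos)
    then show False using q p by linarith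
  qed
  define b2 where "b2 = (a1 * a2 - a3) / a1"
  define b4 where "b4 = a4 / b2"
  define b3 where "b3 = a3 / a1 - b4"
  have b2: "b2 > 0" using d assms by (simp add: b2_def)
  have b4: "b4 > 0" using b2 assms by (simp add: b4_def)
  have b3: "b3 > 0"
  proof -
    have "b4 * (a1 * (a1 * a2 - a3)) = a1^2 * a4"
      using assms(1) d unfolding b4_def b2_def by (simp add: power2_eq_square)
    moreover have "a3 / a1 * (a1 * (a1 * a2 - a3)) = a3 * (a1 * a2 - a3)"
      using assms(1) by simp
    ultimately have "b3 * (a1 * (a1 * a2 - a3)) = a3 * (a1 * a2 - a3) - a1^2 * a4"
      unfolding b3_def by (simp add: left_diff_distrib)
    moreover have "a1 * (a1 * a2 - a3) > 0" using assms(1) d by simp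
    ultimately show ?thesis using q by (metis diff_gt_0_iff_gt zero_less_mult_pos2)
  qed
  have e2: "a2 = b2 + b3 + b4"
  proof -
    have "b2 + b3 + b4 = (a1 * a2 - a3) / a1 + a3 / a1" unfolding b3_def b2_def by simp
    also have "\<dots> = a2" using assms(1) by (simp add: add_divide_distrib[symmetric])
    finally show ?thesis by simp
  qed
  have e3: "a3 = a1 * (b3 + b4)" using assms(1) by (simp add: b3_def)
  have e4: "a4 = b2 * b4" using b2 by (simp add: b4_def)
  show ?thesis using assms(1) b2 b3 b4 e2 e3 e4 by blast
qed

lemma dfb:
  fixes mb tha pa :: real
  assumes "tha > 0" "pa > 0" "na > 0"
    and Z_def: "Z = - (mb * real na * pa ^ (na - 1) * tha ^ na / (pa ^ na + tha ^ na) ^ 2)"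
  shows "((\<lambda>x::state. mb * tha ^ na / (fst (snd (snd x)) ^ na + tha ^ na))
     has_derivative (\<lambda>h. Z * fst (snd (snd h)))) (at (ra, rb, pa, pb))"
proof -
  have "pa ^ na > 0" "tha ^ na > 0" using assms by auto
  then have D: "pa ^ na + tha ^ na \<noteq> 0" by linarith
  show ?thesis
  apply (rule has_derivative_eq_rhs)
  apply (auto intro!: derivative_eq_intros simp: D)[1]
  apply (rule ext)
  apply (simp add: Z_def D field_simps power2_eq_square)
  done
qed

lemma cayley_hamilton0:
  fixes g1 g2 d1 d2 ka kb X Y Z u1 u2 u3 u4 :: real
  shows "Amat g1 g2 d1 d2 ka kb X Y Z (Amat g1 g2 d1 d2 ka kb X Y Z (Amat g1 g2 d1 d2 ka kb X Y Z (Amat g1 g2 d1 d2 ka kb X Y Z (u1, u2, u3, u4))))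
     + cf1 g1 g2 d1 d2 *\<^sub>R Amat g1 g2 d1 d2 ka kb X Y Z (Amat g1 g2 d1 d2 ka kb X Y Z (Amat g1 g2 d1 d2 ka kb X Y Z (u1, u2, u3, u4)))
     + cf2 g1 g2 d1 d2 ka X *\<^sub>R Amat g1 g2 d1 d2 ka kb X Y Z (Amat g1 g2 d1 d2 ka kb X Y Z (u1, u2, u3, u4))
     + cf3 g1 g2 d1 d2 ka X *\<^sub>R Amat g1 g2 d1 d2 ka kb X Y Z (u1, u2, u3, u4) + cf4 g1 g2 d1 d2 ka kb X Y Z *\<^sub>R (u1, u2, u3, u4) = 0"
  unfolding cf1_def cf2_def cf3_def cf4_def
  apply (simp only: Amat_comp scaleR_Pair add_Pair zero_prod_def prod.inject real_scaleR_def)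
  apply (intro conjI)
  apply algebra+
  done
lemma sum5_neg:
  fixes a b c d e :: "'a::ab_group_add"
  assumes "a + b + c + d + e = 0"
  shows "a = - (b + c + d + e)"
proof -
  have "a + (b + c + d + e) = 0" using assms by (simp only: add.assoc)
  then show ?thesis by (simp only: eq_neg_iff_add_eq_0)
qed

lemma cayley_hamilton:
  fixes g1 g2 d1 d2 ka kb X Y Z :: real and h :: state
  shows "Amat g1 g2 d1 d2 ka kb X Y Z (Amat g1 g2 d1 d2 ka kb X Y Z (Amat g1 g2 d1 d2 ka kb X Y Z (Amat g1 g2 d1 d2 ka kb X Y Z h)))
     = - (cf1 g1 g2 d1 d2 *\<^sub>R Amat g1 g2 d1 d2 ka kb X Y Z (Amat g1 g2 d1 d2 ka kb X Y Z (Amat g1 g2 d1 d2 ka kb X Y Z h))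
     + cf2 g1 g2 d1 d2 ka X *\<^sub>R Amat g1 g2 d1 d2 ka kb X Y Z (Amat g1 g2 d1 d2 ka kb X Y Z h)
     + cf3 g1 g2 d1 d2 ka X *\<^sub>R Amat g1 g2 d1 d2 ka kb X Y Z h + cf4 g1 g2 d1 d2 ka kb X Y Z *\<^sub>R h)"
proof -
  obtain u1 u2 u3 u4 where h: "h = (u1, u2, u3, u4)" by (cases h rule: prod_cases4)
  show ?thesis unfolding h by (rule sum5_neg[OF cayley_hamilton0])
qed
lemma abstract_las:
  fixes F :: "'a::real_normed_vector \<Rightarrow> 'a" and A :: "'a \<Rightarrow> 'a" and B :: "'a \<Rightarrow> 'a \<Rightarrow> real"
  assumes FS: "F S = 0"
    and dF: "(F has_derivative A) (at S)"
    and bB: "bounded_bilinear B"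
    and symB: "\<And>x y. B x y = B y x"
    and m: "m > 0" and lower: "\<And>h. m * (norm h)^2 \<le> B h h"
    and mu: "\<mu> > 0" and neg: "\<And>h. B h (A h) \<le> - \<mu> * B h h"
  shows "locally_asymptotically_stable F S"
proof -
  interpret B: bounded_bilinear B by (rule bB)
  obtain K where K: "K > 0" "\<And>a b. norm (B a b) \<le> norm a * norm b * K"
    using B.pos_bounded by blast
  define \<eta> where "\<eta> = \<mu> * m / (2 * K)"
  have eta: "\<eta> > 0" using mu m K by (simp add: \<eta>_def)
  obtain r where r: "r > 0" "\<And>y. norm (y - S) < r \<Longrightarrow> norm (F y - F S - A (y - S)) \<le> \<eta> * norm (y - S)"
    using dF eta unfolding has_derivative_at_alt by blast
  have Bnn: "B h h \<ge> 0" for h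
    using lower[of h] m by (smt (verit) mult_nonneg_nonneg zero_le_power2)
  have Bup: "B h h \<le> K * (norm h)^2" for h
    using K(2)[of h h] by (simp add: power2_eq_square mult_ac)
  have key: "2 * B (y - S) (F y) \<le> - \<mu> * B (y - S) (y - S)" if "norm (y - S) < r" for y
  proof -
    define h where "h = y - S"
    have nh: "norm (F y - A h) \<le> \<eta> * norm h" using r(2)[OF that] FS by (simp add: h_def)
    have "F y = A h + (F y - A h)" by simp
    then have "B h (F y) = B h (A h) + B h (F y - A h)" by (metis B.add_right)
    moreover have "\<bar>B h (F y - A h)\<bar> \<le> norm h * (\<eta> * norm h) * K"
      using K(2)[of h "F y - A h"] nh K(1)
      by (smt (verit) mult_left_mono mult_right_mono norm_ge_zero real_norm_def)
    moreover have "norm h * (\<eta> * norm h) * K = \<mu> / 2 * (m * (norm h)^2)"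
      using K(1) by (simp add: \<eta>_def power2_eq_square field_simps)
    moreover have "\<mu> / 2 * (m * (norm h)^2) \<le> \<mu> / 2 * B h h"
      using lower[of h] mu by simp
    ultimately show ?thesis using neg[of h] unfolding h_def[symmetric] by linarith
  qed
  have main: "\<forall>t\<ge>0. B (x t - S) (x t - S) \<le> B (x 0 - S) (x 0 - S) * exp (- \<mu> * t)"
    if sol: "is_solution F x" and small: "B (x 0 - S) (x 0 - S) < m * r^2" for x
  proof -
    define \<phi> where "\<phi> t = B (x t - S) (x t - S)" for t
    define \<psi> where "\<psi> t = \<phi> t * exp (\<mu> * t)" for t
    have dphi: "(\<phi> has_field_derivative 2 * B (x t - S) (F (x t))) (at t within {0..})" if "t \<ge> 0" for t
    proof -
      have dx: "(x has_derivative (\<lambda>h. h *\<^sub>R F (x t))) (at t within {0..})"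
        using sol that unfolding is_solution_def has_vector_derivative_def by blast
      have dxS: "((\<lambda>t. x t - S) has_derivative (\<lambda>h. h *\<^sub>R F (x t))) (at t within {0..})"
        using has_derivative_diff[OF dx has_derivative_const[of S]] by simp
      have "(\<phi> has_derivative (\<lambda>h. B (x t - S) (h *\<^sub>R F (x t)) + B (h *\<^sub>R F (x t)) (x t - S))) (at t within {0..})"
        unfolding \<phi>_def by (rule B.FDERIV[OF dxS dxS])
      moreover have "(\<lambda>h. B (x t - S) (h *\<^sub>R F (x t)) + B (h *\<^sub>R F (x t)) (x t - S)) = (*) (2 * B (x t - S) (F (x t)))"
        by (rule ext) (simp add: B.scaleR_left B.scaleR_right symB[of "F (x t)"])
      ultimately show ?thesis unfolding has_field_derivative_def by simp
    qed
    have cphi: "continuous_on {0..} \<phi>"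
      using dphi DERIV_continuous continuous_on_eq_continuous_within by (metis atLeast_iff)
    have cpsi: "continuous_on {0..} \<psi>"
      unfolding \<psi>_def by (intro continuous_intros cphi)
    have dpsi: "\<exists>y. (\<psi> has_real_derivative y) (at t) \<and> y \<le> 0"
      if "t > 0" "norm (x t - S) < r" for t
    proof -
      have at: "at t within {0..} = at t"
        using that by (intro at_within_interior) (simp add: interior_real_atLeast)
      have "(\<psi> has_real_derivative (2 * B (x t - S) (F (x t)) * exp (\<mu> * t) + \<phi> t * (exp (\<mu> * t) * \<mu>))) (at t)"
        unfolding \<psi>_def using dphi[of t] that at
        by (auto intro!: derivative_eq_intros)
      moreover have "2 * B (x t - S) (F (x t)) * exp (\<mu> * t) + \<phi> t * (exp (\<mu> * t) * \<mu>) \<le> 0"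
      proof -
        have "2 * B (x t - S) (F (x t)) + \<mu> * \<phi> t \<le> 0" using key[OF that(2)] by (simp add: \<phi>_def)
        then have "(2 * B (x t - S) (F (x t)) + \<mu> * \<phi> t) * exp (\<mu> * t) \<le> 0"
          by (simp add: mult_nonpos_nonneg)
        then show ?thesis by (simp add: algebra_simps)
      qed
      ultimately show ?thesis by blast
    qed
    have nrm: "norm (x t - S) < r" if "\<phi> t < m * r^2" for t
    proof -
      have "m * (norm (x t - S))^2 < m * r^2" using lower[of "x t - S"] that by (simp add: \<phi>_def)
      then have "(norm (x t - S))^2 < r^2" using m by simp
      then show ?thesis using r(1) by (simp add: power2_less_imp_less) 
    qed
    have bound: "\<forall>t\<ge>0. \<phi> t < m * r^2"
    proof (rule ccontr)
      assume "\<not> ?thesis"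
      then obtain t1 where t1: "t1 \<ge> 0" "\<phi> t1 \<ge> m * r^2" by force
      define T where "T = {0..t1} \<inter> \<phi> -` {m * r^2..}"
      have cT: "closed T" unfolding T_def
        by (rule continuous_closed_preimage) (auto intro: continuous_on_subset[OF cphi])
      have neT: "T \<noteq> {}" using t1 by (auto simp: T_def)
      have bT: "bdd_below T" by (auto simp: T_def bdd_below_def)
      define t0 where "t0 = Inf T"
      have t0T: "t0 \<in> T" using closed_contains_Inf[OF neT bT cT] by (simp add: t0_def)
      have before: "\<phi> s < m * r^2" if "0 \<le> s" "s < t0" for s
      proof (rule ccontr)
        assume "\<not> ?thesis"
        then have "s \<in> T" using that t0T by (auto simp: T_def)
        then have "t0 \<le> s" unfolding t0_def using bT by (rule cInf_lower)
        then show False using that by simp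
      qed
      have t0pos: "t0 > 0"
      proof -
        have "t0 \<ge> 0" "\<phi> t0 \<ge> m * r^2" using t0T by (auto simp: T_def)
        moreover have "\<phi> 0 < m * r^2" using small by (simp add: \<phi>_def)
        ultimately show ?thesis by (cases "t0 = 0") auto
      qed
      have "\<psi> t0 \<le> \<psi> 0"
        apply (rule DERIV_nonpos_imp_decreasing_open[of 0 t0 \<psi>])
        using t0pos apply simp
        using dpsi before nrm apply (meson less_eq_real_def)
        using cpsi continuous_on_subset apply (metis atLeastAtMost_iff atLeast_iff subsetI)
        done
      moreover have "\<psi> 0 < m * r^2" using small by (simp add: \<psi>_def \<phi>_def)
      moreover have "\<phi> t0 \<le> \<psi> t0"
      proof -
        have "\<phi> t0 \<ge> 0" by (simp add: \<phi>_def Bnn)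
        moreover have "exp (\<mu> * t0) \<ge> 1" using mu t0pos by simp
        ultimately show ?thesis unfolding \<psi>_def by (metis mult_left_mono mult.right_neutral)
      qed
      moreover have "\<phi> t0 \<ge> m * r^2" using t0T by (auto simp: T_def)
      ultimately show False by linarith
    qed
    show ?thesis
    proof (intro allI impI)
      fix t :: real assume t: "t \<ge> 0"
      have "\<psi> t \<le> \<psi> 0"
      proof (cases "t = 0")
        case False
        show ?thesis
          apply (rule DERIV_nonpos_imp_decreasing_open[of 0 t \<psi>])
          using t apply simp
          using dpsi bound nrm apply (meson less_eq_real_def)
          using cpsi continuous_on_subset apply (metis atLeastAtMost_iff atLeast_iff subsetI)
          done
      qed simp
      then have "\<phi> t * exp (\<mu> * t) \<le> \<phi> 0" by (simp add: \<psi>_def)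
      then have "\<phi> t * exp (\<mu> * t) * exp (- \<mu> * t) \<le> \<phi> 0 * exp (- \<mu> * t)"
        by (simp add: mult_right_mono)
      then show "B (x t - S) (x t - S) \<le> B (x 0 - S) (x 0 - S) * exp (- \<mu> * t)"
        by (simp add: \<phi>_def mult.assoc flip: exp_add)
    qed
  qed
  have init: "B h h < m * \<rho>^2" if "\<rho> > 0" "norm h < min \<rho> (\<rho> * m / K)" for h \<rho>
  proof -
    have "B h h \<le> K * (norm h * norm h)" using Bup[of h] by (simp add: power2_eq_square)
    also have "\<dots> < K * (\<rho> * (\<rho> * m / K))"
      using that K(1) m by (intro mult_strict_left_mono mult_strict_mono) auto
    also have "\<dots> = m * \<rho>^2" using K(1) by (simp add: power2_eq_square field_simps)
    finally show ?thesis .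
  qed
  have stab: "lyapunov_stable F S"
    unfolding lyapunov_stable_def
  proof (intro allI impI)
    fix \<epsilon> :: real assume e: "\<epsilon> > 0"
    define \<rho> where "\<rho> = min r \<epsilon>"
    have rho: "\<rho> > 0" using e r by (simp add: \<rho>_def)
    show "\<exists>\<delta>>0. \<forall>x. is_solution F x \<and> dist (x 0) S < \<delta> \<longrightarrow> (\<forall>t\<ge>0. dist (x t) S < \<epsilon>)"
    proof (intro exI[of _ "min \<rho> (\<rho> * m / K)"] conjI allI impI)
      show "min \<rho> (\<rho> * m / K) > 0" using rho m K by simp
      fix x t assume H: "is_solution F x \<and> dist (x 0) S < min \<rho> (\<rho> * m / K)" and t: "(t::real) \<ge> 0"
      have i: "B (x 0 - S) (x 0 - S) < m * \<rho>^2" using init[OF rho] H by (simp add: dist_norm)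
      have "m * \<rho>^2 \<le> m * r^2" using m rho by (intro mult_left_mono power_mono) (auto simp: \<rho>_def)
      then have "\<forall>t\<ge>0. B (x t - S) (x t - S) \<le> B (x 0 - S) (x 0 - S) * exp (- \<mu> * t)"
        using main H i by force
      then have "B (x t - S) (x t - S) \<le> B (x 0 - S) (x 0 - S)"
        using t mu Bnn[of "x 0 - S"] 
        by (smt (verit) exp_le_one_iff mult_left_le mult_nonneg_nonneg mult_le_0_iff)
      then have "m * (norm (x t - S))^2 < m * \<rho>^2" using lower[of "x t - S"] i by linarith
      then have "(norm (x t - S))^2 < \<rho>^2" using m by simp
      then have "norm (x t - S) < \<rho>" using rho by (simp add: power2_less_imp_less)
      then show "dist (x t) S < \<epsilon>" by (simp add: dist_norm \<rho>_def)
    qed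
  qed
  have attr: "locally_attractive F S"
    unfolding locally_attractive_def
  proof (intro exI[of _ "min r (r * m / K)"] conjI allI impI)
    show "min r (r * m / K) > 0" using r m K by simp
    fix x assume H: "is_solution F x \<and> dist (x 0) S < min r (r * m / K)"
    define c where "c = B (x 0 - S) (x 0 - S) / m"
    have i: "B (x 0 - S) (x 0 - S) < m * r^2" using init[OF r(1)] H by (simp add: dist_norm)
    then have M: "\<forall>t\<ge>0. B (x t - S) (x t - S) \<le> B (x 0 - S) (x 0 - S) * exp (- \<mu> * t)"
      using main H by blast
    have ev: "eventually (\<lambda>t. norm ((norm (x t - S))^2) \<le> c * exp (- \<mu> * t)) at_top"
      using eventually_ge_at_top[of 0]
    proof eventually_elim
      case (elim t)
      have "m * (norm (x t - S))^2 \<le> B (x 0 - S) (x 0 - S) * exp (- \<mu> * t)"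
        using lower[of "x t - S"] M elim by force
      then show ?case using m by (simp add: c_def field_simps)
    qed
    have "filterlim (\<lambda>t. \<mu> * (- t)) at_bot at_top"
      by (rule filterlim_tendsto_pos_mult_at_bot[OF tendsto_const mu filterlim_uminus_at_bot_at_top])
    then have "((\<lambda>t. exp (\<mu> * (- t))) \<longlongrightarrow> 0) at_top"
      using filterlim_compose[OF exp_at_bot] by blast
    then have "((\<lambda>t. exp (- \<mu> * t)) \<longlongrightarrow> 0) at_top" by simp
    then have "((\<lambda>t. c * exp (- \<mu> * t)) \<longlongrightarrow> 0) at_top"
      using tendsto_mult_right_zero by blast
    then have "((\<lambda>t. (norm (x t - S))^2) \<longlongrightarrow> 0) at_top"
      using Lim_null_comparison[OF ev] by blast
    then have "((\<lambda>t. sqrt ((norm (x t - S))^2)) \<longlongrightarrow> sqrt 0) at_top"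
      by (rule tendsto_real_sqrt)
    then have "((\<lambda>t. norm (x t - S)) \<longlongrightarrow> 0) at_top" by simp
    then have "((\<lambda>t. x t - S) \<longlongrightarrow> 0) at_top" by (simp add: tendsto_norm_zero_iff)
    then show "(x \<longlongrightarrow> S) at_top" by (rule LIM_zero_cancel)
  qed
  show ?thesis unfolding locally_asymptotically_stable_def using FS stab attr by blast
qed

theorem theorem2:
  fixes ma mb ga gb ka kb da db tha thb thaa A1 B1 ra rb pa pb :: real
    and na nb naa :: nat
  assumes pos: "ma > 0" "mb > 0" "ga > 0" "gb > 0" "ka > 0" "kb > 0" "da > 0" "db > 0"
      "tha > 0" "thb > 0" "thaa > 0"
    and nonneg: "A1 \<ge> 0" "B1 \<ge> 0"
    and npos: "na > 0" "nb > 0" "naa > 0"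
    and steady: "grn_field ma mb ga gb ka kb da db tha thb thaa A1 B1 na nb naa (ra, rb, pa, pb) = 0"
    and ppos: "pa > 0" "pb > 0"
    and X_def: "X = ma * real naa * pa ^ (naa - 1) * thb ^ (2 * nb) * thaa ^ naa
                    / (pa ^ naa * pb ^ nb + thb ^ nb * thaa ^ naa) ^ 2"
    and Y_def: "Y = - (ma * real nb * pa ^ (2 * naa) * pb ^ (nb - 1) * thb ^ nb
                    / (pa ^ naa * pb ^ nb + thb ^ nb * thaa ^ naa) ^ 2)"
    and Z_def: "Z = - (mb * real na * pa ^ (na - 1) * tha ^ na / (pa ^ na + tha ^ na) ^ 2)"
    and e1_def: "e1 = ga + gb + da + db"
    and e2_def: "e2 = ga * gb + (ga + gb) * (da + db) + da * db - ka * X"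
    and e3_def: "e3 = da * db * (ga + gb) + (da + db) * ga * gb - ka * (db + gb) * X"
    and e4_def: "e4 = ga * gb * da * db - ka * kb * Y * Z - ka * gb * db * X"
    and h1: "e1 > 0" and h3: "e3 > 0" and h4: "e4 > 0"
    and h5: "e1 * e2 * e3 - e1 ^ 2 * e4 - e3 ^ 2 > 0"
  shows "locally_asymptotically_stable
           (grn_field ma mb ga gb ka kb da db tha thb thaa A1 B1 na nb naa) (ra, rb, pa, pb)"
proof -
  define F where "F = grn_field ma mb ga gb ka kb da db tha thb thaa A1 B1 na nb naa"
  have Falt: "F = (\<lambda>x. (ma * thb ^ nb * fst (snd (snd x)) ^ naa / (fst (snd (snd x)) ^ naa * snd (snd (snd x)) ^ nb + thb ^ nb * thaa ^ naa) - ga * fst x + A1,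
       mb * tha ^ na / (fst (snd (snd x)) ^ na + tha ^ na) - gb * fst (snd x) + B1,
       ka * fst x - da * fst (snd (snd x)),
       kb * fst (snd x) - db * snd (snd (snd x))))"
    unfolding F_def
  proof (rule ext)
    fix x :: state
    obtain x1 x2 x3 x4 where x: "x = (x1, x2, x3, x4)" by (cases x rule: prod_cases4)
    show "grn_field ma mb ga gb ka kb da db tha thb thaa A1 B1 na nb naa x = (ma * thb ^ nb * fst (snd (snd x)) ^ naa / (fst (snd (snd x)) ^ naa * snd (snd (snd x)) ^ nb + thb ^ nb * thaa ^ naa) - ga * fst x + A1,
       mb * tha ^ na / (fst (snd (snd x)) ^ na + tha ^ na) - gb * fst (snd x) + B1,
       ka * fst x - da * fst (snd (snd x)),
       kb * fst (snd x) - db * snd (snd (snd x)))"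
      unfolding x grn_field_def by (simp add: hill_a[OF pos(10) pos(11)] hill_b[OF pos(9)])
  qed
  note dFa = dfa[OF pos(10) pos(11) ppos X_def Y_def, of ra rb]
  note dFb = dfb[OF pos(9) ppos(1) npos(1) Z_def, of ra rb pb]
  have dF: "(F has_derivative Amat ga gb da db ka kb X Y Z) (at (ra, rb, pa, pb))"
    unfolding Falt
    apply (rule has_derivative_eq_rhs)
     apply (rule has_derivative_Pair has_derivative_add has_derivative_diff dFa dFb
        has_derivative_mult_right has_derivative_fst has_derivative_snd has_derivative_ident
        has_derivative_const)+
    apply (rule ext)
    subgoal for h by (cases h rule: prod_cases4) (simp add: Amat_comp algebra_simps)
    done
  have FS: "F (ra, rb, pa, pb) = 0" using steady by (simp add: F_def)
  define E1 where "E1 \<mu> = cf1 (ga - \<mu>) (gb - \<mu>) (da - \<mu>) (db - \<mu>)" for \<mu>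
  define E2 where "E2 \<mu> = cf2 (ga - \<mu>) (gb - \<mu>) (da - \<mu>) (db - \<mu>) ka X" for \<mu>
  define E3 where "E3 \<mu> = cf3 (ga - \<mu>) (gb - \<mu>) (da - \<mu>) (db - \<mu>) ka X" for \<mu>
  define E4 where "E4 \<mu> = cf4 (ga - \<mu>) (gb - \<mu>) (da - \<mu>) (db - \<mu>) ka kb X Y Z" for \<mu>
  define R where "R \<mu> = E1 \<mu> * E2 \<mu> * E3 \<mu> - E1 \<mu> ^ 2 * E4 \<mu> - E3 \<mu> ^ 2" for \<mu>
  have E0: "E1 0 = e1" "E2 0 = e2" "E3 0 = e3" "E4 0 = e4"
    by (simp_all add: E1_def E2_def E3_def E4_def cf1_def cf2_def cf3_def cf4_def
        e1_def e2_def e3_def e4_def)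
  have R0: "R 0 = e1 * e2 * e3 - e1 ^ 2 * e4 - e3 ^ 2" by (simp add: R_def E0)
  have ev: "eventually (\<lambda>\<mu>. f \<mu> > 0) (at_right 0)"
    if "continuous (at_right 0) f" "f 0 > 0" for f :: "real \<Rightarrow> real"
    using that order_tendstoD(1)[of f "f 0" "at_right 0" 0] by (simp add: continuous_within)
  have c1: "continuous (at_right 0) E1" unfolding E1_def cf1_def by (intro continuous_intros)
  have c3: "continuous (at_right 0) E3" unfolding E3_def cf3_def by (intro continuous_intros)
  have c4: "continuous (at_right 0) E4" unfolding E4_def cf4_def by (intro continuous_intros)
  have cR: "continuous (at_right 0) R"
    unfolding R_def E1_def E2_def E3_def E4_def cf1_def cf2_def cf3_def cf4_def
    by (intro continuous_intros)
  have ev1: "eventually (\<lambda>\<mu>. E1 \<mu> > 0) (at_right 0)" using ev[OF c1] h1 E0 by simp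
  have ev3: "eventually (\<lambda>\<mu>. E3 \<mu> > 0) (at_right 0)" using ev[OF c3] h3 E0 by simp
  have ev4: "eventually (\<lambda>\<mu>. E4 \<mu> > 0) (at_right 0)" using ev[OF c4] h4 E0 by simp
  have evR: "eventually (\<lambda>\<mu>. R \<mu> > 0) (at_right 0)" using ev[OF cR] h5 R0 by simp
  have "eventually (\<lambda>\<mu>. E1 \<mu> > 0 \<and> E3 \<mu> > 0 \<and> E4 \<mu> > 0 \<and> R \<mu> > 0) (at_right 0)"
    by (intro eventually_conj ev1 ev3 ev4 evR)
  then obtain bnd where bnd: "bnd > 0" "\<And>y. y > 0 \<Longrightarrow> y < bnd \<Longrightarrow> E1 y > 0 \<and> E3 y > 0 \<and> E4 y > 0 \<and> R y > 0"
    unfolding eventually_at_right_field by auto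
  define \<mu> where "\<mu> = bnd / 2"
  have mu: "\<mu> > 0" and Emu: "E1 \<mu> > 0" "E3 \<mu> > 0" "E4 \<mu> > 0" "R \<mu> > 0"
    using bnd unfolding \<mu>_def by auto
  obtain b1 b2 b3 b4 where b: "b1 > 0" "b2 > 0" "b3 > 0" "b4 > 0" "E1 \<mu> = b1" "E2 \<mu> = b2 + b3 + b4"
      "E3 \<mu> = b1 * (b3 + b4)" "E4 \<mu> = b2 * b4"
    using rh_b[OF Emu(1) Emu(2) Emu(3)] Emu(4) unfolding R_def by blast
  define N where "N = Amat (ga - \<mu>) (gb - \<mu>) (da - \<mu>) (db - \<mu>) ka kb X Y Z"
  define B where "B h w = b2 * b3 * b4 * inner h w + b2 * b3 * inner (N h) (N w)
      + b2 * inner (N (N h) + b4 *\<^sub>R h) (N (N w) + b4 *\<^sub>R w)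
      + inner (N (N (N h)) + (b3 + b4) *\<^sub>R N h) (N (N (N w)) + (b3 + b4) *\<^sub>R N w)" for h w :: state
  have Nadd: "N (x + y) = N x + N y" for x y unfolding N_def by (rule Amat_add)
  have Nscale: "N (c *\<^sub>R x) = c *\<^sub>R N x" for c x unfolding N_def by (rule Amat_scale)
  have bil: "bilinear B"
  proof -
    have l1: "linear (\<lambda>w. B h w)" for h
      by (rule linearI) (simp_all add: B_def Nadd Nscale inner_add_right scaleR_add_right algebra_simps)
    have l2: "linear (\<lambda>h. B h w)" for w
      by (rule linearI) (simp_all add: B_def Nadd Nscale inner_add_left scaleR_add_right algebra_simps)
    show ?thesis unfolding bilinear_def using l1 l2 by blast
  qed
  have bB: "bounded_bilinear B" using bil bilinear_conv_bounded_bilinear by blast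
  have symB: "B x y = B y x" for x y by (simp add: B_def inner_commute)
  have m: "b2 * b3 * b4 > 0" using b by simp
  have lower: "b2 * b3 * b4 * (norm h)^2 \<le> B h h" for h
  proof -
    have "0 \<le> b2 * b3 * inner (N h) (N h)" using b by simp
    moreover have "0 \<le> b2 * inner (N (N h) + b4 *\<^sub>R h) (N (N h) + b4 *\<^sub>R h)" using b by simp
    moreover have "0 \<le> inner (N (N (N h)) + (b3 + b4) *\<^sub>R N h) (N (N (N h)) + (b3 + b4) *\<^sub>R N h)" by simp
    ultimately show ?thesis by (simp add: B_def power2_norm_eq_inner)
  qed
  have CH: "N (N (N (N h))) = - (b1 *\<^sub>R N (N (N h)) + (b2 + b3 + b4) *\<^sub>R N (N h)
      + (b1 * (b3 + b4)) *\<^sub>R N h + (b2 * b4) *\<^sub>R h)" for h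
    using cayley_hamilton[of "ga - \<mu>" "gb - \<mu>" "da - \<mu>" "db - \<mu>" ka kb X Y Z h] b
    unfolding N_def E1_def E2_def E3_def E4_def by simp
  have negN: "B h (N h) \<le> 0" for h
  proof -
    have "B h (N h) = - b1 * inner (N (N (N h)) + (b3 + b4) *\<^sub>R N h) (N (N (N h)) + (b3 + b4) *\<^sub>R N h)"
      unfolding B_def by (rule lyap_id[OF CH])
    then show ?thesis using b(1) by (simp add: mult_nonneg_nonneg)
  qed
  have neg: "B h (Amat ga gb da db ka kb X Y Z h) \<le> - \<mu> * B h h" for h
  proof -
    have "Amat ga gb da db ka kb X Y Z h = N h - \<mu> *\<^sub>R h" unfolding N_def by (rule Amat_shift)
    then have "B h (Amat ga gb da db ka kb X Y Z h) = B h (N h) - \<mu> * B h h"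
      using bounded_bilinear.diff_right[OF bB] bounded_bilinear.scaleR_right[OF bB] by simp
    then show ?thesis using negN[of h] by simp
  qed
  show ?thesis
    using abstract_las[OF FS dF bB symB m lower mu neg] by (simp add: F_def)
qed

end
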